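(* Let $n\ge 2$, $d\ge 1$, $\tau>0$, $\sigma>0$. Let $\mu^\star_1,\mu^\star_2\stackrel{\mathrm{i.i.d.}}{\sim}\mathcal N(0,\tau^2 I_d)$ and $\xi_1,\dots,\xi_n\stackrel{\mathrm{i.i.d.}}{\sim}\mathcal N(0,\sigma^2 I_d)$, independent, let $z^\star_1,\dots,z^\star_n\in\{1,2\}$ be fixed labels with both classes $S^\star_\ell=\{i:z^\star_i=\ell\}$ nonempty, and $x_i=\mu^\star_{z^\star_i}+\xi_i$. Let $\mathcal P=\{C_1,C_2\}$ be a fixed partition of $[n]$ into two nonempty sets, and suppose there exist $i\in[n]$, $\ell$ with $i\in S^\star_\ell$, and $j$ with $i\in C_j$ ($\overline j$ the other index) such that $0<R^\ell_j\le R^\ell_{\overline j}\le1$. Then $$\mathbb P(\mathcal P\text{ is a fixed point of Hartigan's algorithm})\le\rho^{d/4},$$ with $$\rho=1-\left(\frac{\tau^2\Bigl(\frac{|C_j|}{|C_j|-1}(1-R^\ell_j)^2-\frac{|C_{\overline j}|}{|C_{\overline j}|+1}(1-R^\ell_{\overline j})^2\Bigr)}{\tau^2\Bigl(\frac{|C_j|}{|C_j|-1}(1-R^\ell_j)^2+\frac{|C_{\overline j}|}{|C_{\overline j}|+1}(1-R^\ell_{\overline j})^2\Bigr)+\sigma^2}\right)^2.$$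
   Context: $R^\ell_k=|C_k\cap S^\star_\ell|/|C_k|$. Centroids $\widehat\mu_k=|C_k|^{-1}\sum_{m\in C_k}x_m$. Hartigan weighted distance: $\Delta_H^2(x_i,C_k)=\frac{|C_k|}{|C_k|-1}\|x_i-\widehat\mu_k\|^2$ if $i\in C_k$, and $\frac{|C_k|}{|C_k|+1}\|x_i-\widehat\mu_k\|^2$ if $i\notin C_k$. Hartigan's algorithm considers single-sample moves: a sample $i$ in a cluster $C_k$ with $|C_k|>1$ is moved to the other cluster $C_{k'}$ if $\Delta_H^2(x_i,C_{k'})<\Delta_H^2(x_i,C_k)$. A partition is a fixed point of Hartigan's algorithm if no such move exists, i.e. for every $i$ in a cluster $C_k$ with $|C_k|>1$, $\Delta_H^2(x_i,C_k)\le\Delta_H^2(x_i,C_{k'})$. Randomness is over the centers and noise. *)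

theory Defs
  imports "HOL-Probability.Probability"
begin

(* Samples are indexed by [n] = {1..n}, classes / clusters by {1,2}, coordinates by {..<d}. *)

definition gauss1 :: "real \<Rightarrow> real measure" where
  "gauss1 s = density lborel (normal_density 0 s)"

(* Outcome (m, e): m (l, c) = c-th coordinate of centre mu*_l (l \<in> {1,2});
   e (i, c) = c-th coordinate of noise xi_i (i \<in> {1..n}). All coordinates independent. *)
definition model :: "nat \<Rightarrow> nat \<Rightarrow> real \<Rightarrow> real \<Rightarrow>
    ((nat \<times> nat \<Rightarrow> real) \<times> (nat \<times> nat \<Rightarrow> real)) measure" where
  "model n d \<tau> \<sigma> =
     PiM ({1,2} \<times> {..<d}) (\<lambda>_. gauss1 \<tau>) \<Otimes>\<^sub>M PiM ({1..n} \<times> {..<d}) (\<lambda>_. gauss1 \<sigma>)"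

definition datum :: "(nat \<Rightarrow> nat) \<Rightarrow> (nat \<times> nat \<Rightarrow> real) \<times> (nat \<times> nat \<Rightarrow> real)
    \<Rightarrow> nat \<Rightarrow> nat \<Rightarrow> real" where
  "datum z \<omega> i c = fst \<omega> (z i, c) + snd \<omega> (i, c)"

definition centroid :: "(nat \<Rightarrow> nat \<Rightarrow> real) \<Rightarrow> nat set \<Rightarrow> nat \<Rightarrow> real" where
  "centroid x C c = (\<Sum>m\<in>C. x m c) / real (card C)"

definition sqdist :: "nat \<Rightarrow> (nat \<Rightarrow> real) \<Rightarrow> (nat \<Rightarrow> real) \<Rightarrow> real" where
  "sqdist d u v = (\<Sum>c<d. (u c - v c)\<^sup>2)"

definition hartigan_dist :: "nat \<Rightarrow> (nat \<Rightarrow> nat \<Rightarrow> real) \<Rightarrow> nat \<Rightarrow> nat set \<Rightarrow> real" where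
  "hartigan_dist d x i C =
     (if i \<in> C then real (card C) / (real (card C) - 1)
      else real (card C) / (real (card C) + 1)) * sqdist d (x i) (centroid x C)"

definition other :: "nat \<Rightarrow> nat" where
  "other j = 3 - j"

definition hartigan_fixed_point :: "nat \<Rightarrow> (nat \<Rightarrow> nat \<Rightarrow> real) \<Rightarrow> (nat \<Rightarrow> nat set) \<Rightarrow> bool" where
  "hartigan_fixed_point d x C =
     (\<forall>k\<in>{1,2}. \<forall>i\<in>C k. card (C k) > 1 \<longrightarrow>
        hartigan_dist d x i (C k) \<le> hartigan_dist d x i (C (other k)))"

definition true_class :: "nat \<Rightarrow> (nat \<Rightarrow> nat) \<Rightarrow> nat \<Rightarrow> nat set" where
  "true_class n z l = {i \<in> {1..n}. z i = l}"

definition Rfrac :: "nat \<Rightarrow> (nat \<Rightarrow> nat) \<Rightarrow> (nat \<Rightarrow> nat set) \<Rightarrow> nat \<Rightarrow> nat \<Rightarrow> real" where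
  "Rfrac n z C l k = real (card (C k \<inter> true_class n z l)) / real (card (C k))"

definition rho :: "real \<Rightarrow> real \<Rightarrow> (nat \<Rightarrow> nat set) \<Rightarrow> real \<Rightarrow> real \<Rightarrow> nat \<Rightarrow> real" where
  "rho \<tau> \<sigma> C Rj Rjb j =
     (let a = real (card (C j)) / (real (card (C j)) - 1) * (1 - Rj)\<^sup>2;
          b = real (card (C (other j))) / (real (card (C (other j))) + 1) * (1 - Rjb)\<^sup>2
      in 1 - ((\<tau>\<^sup>2 * (a - b)) / (\<tau>\<^sup>2 * (a + b) + \<sigma>\<^sup>2))\<^sup>2)"

end

theory Submission
  imports Defs
begin

lemma gauss_nn:
  fixes s \<kappa> :: real
  assumes s: "s > 0" and k: "1 + 2 * \<kappa> * s\<^sup>2 > 0"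
  shows "(\<integral>\<^sup>+x. ennreal (normal_density 0 s x) * ennreal (exp (- \<kappa> * x\<^sup>2)) \<partial>lborel)
         = ennreal (1 / sqrt (1 + 2 * \<kappa> * s\<^sup>2))"
proof -
  define q where "q = sqrt (1 + 2 * \<kappa> * s\<^sup>2)"
  have q: "q > 0" "q\<^sup>2 = 1 + 2 * \<kappa> * s\<^sup>2" using k by (auto simp: q_def)
  define s' where "s' = s / q"
  have s': "s' > 0" using s q by (simp add: s'_def)
  have eq: "normal_density 0 s x * exp (- \<kappa> * x\<^sup>2) = (1/q) * normal_density 0 s' x" for x
  proof -
    have e: "exp (-(x - 0)\<^sup>2 / (2 * s\<^sup>2)) * exp (- \<kappa> * x\<^sup>2) = exp (-(x - 0)\<^sup>2 / (2 * s'\<^sup>2))"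
    proof -
      have "-(x - 0)\<^sup>2 / (2 * s\<^sup>2) + (- \<kappa> * x\<^sup>2) = -(x - 0)\<^sup>2 / (2 * s'\<^sup>2)"
        using s q by (simp add: s'_def power_divide field_simps)
      then show ?thesis by (simp add: mult_exp_exp)
    qed
    have r: "sqrt (2 * pi * s'\<^sup>2) = sqrt (2 * pi * s\<^sup>2) / q"
      using s q by (simp add: s'_def power_divide real_sqrt_divide real_sqrt_mult q_def)
    show ?thesis unfolding normal_density_def using e r q s
      by (simp add: field_simps)
  qed
  have "(\<integral>\<^sup>+x. ennreal (normal_density 0 s x) * ennreal (exp (- \<kappa> * x\<^sup>2)) \<partial>lborel)
      = (\<integral>\<^sup>+x. ennreal (1/q) * ennreal (normal_density 0 s' x) \<partial>lborel)"
  proof (intro nn_integral_cong)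
    fix x
    have "ennreal (normal_density 0 s x) * ennreal (exp (- \<kappa> * x\<^sup>2)) = ennreal (normal_density 0 s x * exp (- \<kappa> * x\<^sup>2))"
      by (simp add: ennreal_mult)
    also have "\<dots> = ennreal ((1/q) * normal_density 0 s' x)" by (simp only: eq)
    also have "\<dots> = ennreal (1/q) * ennreal (normal_density 0 s' x)"
      using q by (subst ennreal_mult) auto
    finally show "ennreal (normal_density 0 s x) * ennreal (exp (- \<kappa> * x\<^sup>2)) = ennreal (1/q) * ennreal (normal_density 0 s' x)" .
  qed
  also have "\<dots> = ennreal (1/q) * (\<integral>\<^sup>+x. ennreal (normal_density 0 s' x) \<partial>lborel)"
    by (rule nn_integral_cmult) simp
  also have "(\<integral>\<^sup>+x. ennreal (normal_density 0 s' x) \<partial>lborel) = 1"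
    using s' by (subst nn_integral_eq_integral) (auto intro: integrable_normal_density)
  finally show ?thesis by (simp add: q_def)
qed



definition keyval :: "('a + 'b) \<Rightarrow> ('a \<Rightarrow> real) \<times> ('b \<Rightarrow> real) \<Rightarrow> real" where
  "keyval k \<omega> = (case k of Inl a \<Rightarrow> fst \<omega> a | Inr b \<Rightarrow> snd \<omega> b)"

definition GG :: "real \<Rightarrow> real \<Rightarrow> ('a + 'b) \<Rightarrow> real measure" where
  "GG t s k = (case k of Inl _ \<Rightarrow> gauss1 t | Inr _ \<Rightarrow> gauss1 s)"

lemma prob_space_gauss1: "s > 0 \<Longrightarrow> prob_space (gauss1 s)"
  unfolding gauss1_def by (rule prob_space_normal_density)

lemma sets_gauss1[simp]: "sets (gauss1 s) = sets borel"
  unfolding gauss1_def by simp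

lemma space_gauss1[simp]: "space (gauss1 s) = UNIV"
  unfolding gauss1_def by simp

lemma sets_GG[simp]: "sets (GG t s k) = sets borel"
  unfolding GG_def by (cases k) auto

lemma prob_space_GG: "t > 0 \<Longrightarrow> s > 0 \<Longrightarrow> prob_space (GG t s k)"
  unfolding GG_def by (cases k) (auto intro: prob_space_gauss1)

lemma psf_gauss1: "s > 0 \<Longrightarrow> product_sigma_finite (\<lambda>_. gauss1 s)"
  unfolding product_sigma_finite_def by (auto intro: prob_space_gauss1 prob_space_imp_sigma_finite)

lemma keyval_meas:
  assumes "k \<in> Inl ` A \<union> Inr ` B"
  shows "keyval k \<in> measurable (PiM A (\<lambda>_. gauss1 t) \<Otimes>\<^sub>M PiM B (\<lambda>_. gauss1 s)) borel"
proof (cases k)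
  case (Inl a)
  with assms have a: "a \<in> A" by auto
  have "(\<lambda>\<omega>. fst \<omega> a) \<in> measurable (PiM A (\<lambda>_. gauss1 t) \<Otimes>\<^sub>M PiM B (\<lambda>_. gauss1 s)) (gauss1 t)"
    using a by (rule measurable_compose[OF measurable_fst measurable_component_singleton])
  then show ?thesis using Inl unfolding keyval_def by (simp add: measurable_cong_sets[OF refl sets_gauss1])
next
  case (Inr b)
  with assms have b: "b \<in> B" by auto
  have "(\<lambda>\<omega>. snd \<omega> b) \<in> measurable (PiM A (\<lambda>_. gauss1 t) \<Otimes>\<^sub>M PiM B (\<lambda>_. gauss1 s)) (gauss1 s)"
    using b by (rule measurable_compose[OF measurable_snd measurable_component_singleton])
  then show ?thesis using Inr unfolding keyval_def by (simp add: measurable_cong_sets[OF refl sets_gauss1])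
qed

lemma model_distr:
  fixes t s :: real
  assumes fin: "finite A" "finite B" and ts: "t > 0" "s > 0"
  defines "M \<equiv> PiM A (\<lambda>_. gauss1 t) \<Otimes>\<^sub>M PiM B (\<lambda>_. gauss1 s)"
  defines "I \<equiv> Inl ` A \<union> Inr ` B"
  shows "distr M (PiM I (GG t s)) (\<lambda>\<omega>. \<lambda>k\<in>I. keyval k \<omega>) = PiM I (GG t s)"
proof -
  interpret G: product_prob_space "GG t s"
    unfolding product_prob_space_def product_prob_space_axioms_def product_sigma_finite_def
    using ts by (auto intro: prob_space_GG prob_space_imp_sigma_finite)
  interpret PA: prob_space "PiM A (\<lambda>_. gauss1 t)" using ts by (intro prob_space_PiM prob_space_gauss1)
  interpret PB: prob_space "PiM B (\<lambda>_. gauss1 s)" using ts by (intro prob_space_PiM prob_space_gauss1)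
  interpret PP: pair_prob_space "PiM A (\<lambda>_. gauss1 t)" "PiM B (\<lambda>_. gauss1 s)" ..
  interpret gt: product_prob_space "\<lambda>_. gauss1 t"
    unfolding product_prob_space_def product_prob_space_axioms_def product_sigma_finite_def
    using ts by (auto intro: prob_space_gauss1 prob_space_imp_sigma_finite)
  interpret gs: product_prob_space "\<lambda>_. gauss1 s"
    unfolding product_prob_space_def product_prob_space_axioms_def product_sigma_finite_def
    using ts by (auto intro: prob_space_gauss1 prob_space_imp_sigma_finite)
  have finI: "finite I" using fin by (simp add: I_def)
  have meas: "(\<lambda>\<omega>. \<lambda>k\<in>I. keyval k \<omega>) \<in> measurable M (PiM I (GG t s))"
    unfolding M_def
    by (rule measurable_restrict, subst measurable_cong_sets[OF refl sets_GG], rule keyval_meas)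
       (simp add: I_def)
  show ?thesis
  proof (rule G.PiM_eqI[OF finI])
    show "sets (distr M (Pi\<^sub>M I (GG t s)) (\<lambda>\<omega>. \<lambda>k\<in>I. keyval k \<omega>)) = sets (Pi\<^sub>M I (GG t s))" by simp
  next
    fix X assume X: "\<And>i. i \<in> I \<Longrightarrow> X i \<in> sets (GG t s i)"
    have XA: "\<And>a. a \<in> A \<Longrightarrow> X (Inl a) \<in> sets (gauss1 t)" proof -
      fix a assume "a \<in> A" then have "X (Inl a) \<in> sets (GG t s (Inl a))" using X by (auto simp: I_def)
      then show "X (Inl a) \<in> sets (gauss1 t)" by simp
    qed
    have XB: "\<And>b. b \<in> B \<Longrightarrow> X (Inr b) \<in> sets (gauss1 s)" proof -
      fix b assume "b \<in> B" then have "X (Inr b) \<in> sets (GG t s (Inr b))" using X by (auto simp: I_def)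
      then show "X (Inr b) \<in> sets (gauss1 s)" by simp
    qed
    have pre: "(\<lambda>\<omega>. \<lambda>k\<in>I. keyval k \<omega>) -` Pi\<^sub>E I X \<inter> space M
        = (\<Pi>\<^sub>E a\<in>A. X (Inl a)) \<times> (\<Pi>\<^sub>E b\<in>B. X (Inr b))"
    proof (intro set_eqI iffI)
      fix \<omega> assume "\<omega> \<in> (\<lambda>\<omega>. \<lambda>k\<in>I. keyval k \<omega>) -` Pi\<^sub>E I X \<inter> space M"
      then have h: "\<And>k. k \<in> I \<Longrightarrow> keyval k \<omega> \<in> X k" and sp: "\<omega> \<in> space M"
        by (auto simp: PiE_iff)
      obtain f g where fg: "\<omega> = (f, g)" by (cases \<omega>)
      from sp have ext: "f \<in> extensional A" "g \<in> extensional B"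
        by (auto simp: M_def space_pair_measure space_PiM fg PiE_iff)
      have "f a \<in> X (Inl a)" if "a \<in> A" for a using h[of "Inl a"] that by (simp add: I_def keyval_def fg)
      moreover have "g b \<in> X (Inr b)" if "b \<in> B" for b using h[of "Inr b"] that by (simp add: I_def keyval_def fg)
      ultimately show "\<omega> \<in> (\<Pi>\<^sub>E a\<in>A. X (Inl a)) \<times> (\<Pi>\<^sub>E b\<in>B. X (Inr b))"
        using ext by (simp add: fg PiE_iff)
    next
      fix \<omega> assume "\<omega> \<in> (\<Pi>\<^sub>E a\<in>A. X (Inl a)) \<times> (\<Pi>\<^sub>E b\<in>B. X (Inr b))"
      then obtain f g where fg: "\<omega> = (f, g)" and f: "f \<in> (\<Pi>\<^sub>E a\<in>A. X (Inl a))" and g: "g \<in> (\<Pi>\<^sub>E b\<in>B. X (Inr b))"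
        by auto
      have sp: "\<omega> \<in> space M" using f g by (auto simp: M_def space_pair_measure space_PiM fg PiE_iff)
      have "keyval k \<omega> \<in> X k" if "k \<in> I" for k
        using that f g by (auto simp: I_def keyval_def fg PiE_iff)
      then show "\<omega> \<in> (\<lambda>\<omega>. \<lambda>k\<in>I. keyval k \<omega>) -` Pi\<^sub>E I X \<inter> space M"
        using sp by (auto simp: PiE_iff)
    qed
    have "emeasure (distr M (Pi\<^sub>M I (GG t s)) (\<lambda>\<omega>. \<lambda>k\<in>I. keyval k \<omega>)) (Pi\<^sub>E I X)
        = emeasure M ((\<Pi>\<^sub>E a\<in>A. X (Inl a)) \<times> (\<Pi>\<^sub>E b\<in>B. X (Inr b)))"
      using X meas by (subst emeasure_distr) (auto simp: pre intro!: sets_PiM_I_finite finI)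
    also have "\<dots> = emeasure (PiM A (\<lambda>_. gauss1 t)) (\<Pi>\<^sub>E a\<in>A. X (Inl a)) *
                    emeasure (PiM B (\<lambda>_. gauss1 s)) (\<Pi>\<^sub>E b\<in>B. X (Inr b))"
      unfolding M_def using XA XB fin
      by (intro PB.emeasure_pair_measure_Times sets_PiM_I_finite) auto
    also have "\<dots> = (\<Prod>a\<in>A. emeasure (gauss1 t) (X (Inl a))) * (\<Prod>b\<in>B. emeasure (gauss1 s) (X (Inr b)))"
    proof -
      have "emeasure (PiM A (\<lambda>_. gauss1 t)) (\<Pi>\<^sub>E a\<in>A. X (Inl a)) = (\<Prod>a\<in>A. emeasure (gauss1 t) (X (Inl a)))"
        by (rule product_sigma_finite.emeasure_PiM[OF psf_gauss1[OF ts(1)] fin(1)]) (rule XA)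
      moreover have "emeasure (PiM B (\<lambda>_. gauss1 s)) (\<Pi>\<^sub>E b\<in>B. X (Inr b)) = (\<Prod>b\<in>B. emeasure (gauss1 s) (X (Inr b)))"
        by (rule product_sigma_finite.emeasure_PiM[OF psf_gauss1[OF ts(2)] fin(2)]) (rule XB)
      ultimately show ?thesis by simp
    qed
    also have "\<dots> = (\<Prod>k\<in>I. emeasure (GG t s k) (X k))"
      unfolding I_def
      by (subst prod.union_disjoint) (auto simp: fin prod.reindex GG_def)
    finally show "emeasure (distr M (Pi\<^sub>M I (GG t s)) (\<lambda>\<omega>. \<lambda>k\<in>I. keyval k \<omega>)) (Pi\<^sub>E I X) = (\<Prod>k\<in>I. emeasure (GG t s k) (X k))" .
  qed
qed



definition sdk :: "real \<Rightarrow> real \<Rightarrow> ('a + 'b) \<Rightarrow> real" where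
  "sdk t s k = (case k of Inl _ \<Rightarrow> t | Inr _ \<Rightarrow> s)"

lemma GG_sdk: "GG t s k = density lborel (normal_density 0 (sdk t s k))"
  unfolding GG_def sdk_def gauss1_def by (cases k) auto

lemma model_facts:
  fixes t s :: real
  assumes fin: "finite A" "finite B" and ts: "t > 0" "s > 0"
  defines "M \<equiv> PiM A (\<lambda>_. gauss1 t) \<Otimes>\<^sub>M PiM B (\<lambda>_. gauss1 s)"
  defines "I \<equiv> Inl ` A \<union> Inr ` B"
  shows "prob_space M"
    and "\<And>k. k \<in> I \<Longrightarrow> distributed M lborel (keyval k) (normal_density 0 (sdk t s k))"
    and "I \<noteq> {} \<Longrightarrow> prob_space.indep_vars M (\<lambda>_. borel) keyval I"
proof -
  show PS: "prob_space M" unfolding M_def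
    using ts by (intro prob_space_pair prob_space_PiM prob_space_gauss1)
  interpret prob_space M by (rule PS)
  define \<Psi> where "\<Psi> = (\<lambda>\<omega>. \<lambda>k\<in>I. keyval k \<omega>)"
  have D: "distr M (PiM I (GG t s)) \<Psi> = PiM I (GG t s)"
    unfolding \<Psi>_def M_def I_def by (rule model_distr[OF fin ts])
  have kv: "keyval k \<in> measurable M borel" if "k \<in> I" for k
    using that unfolding M_def I_def by (rule keyval_meas)
  have meas: "\<Psi> \<in> measurable M (PiM I (GG t s))"
    unfolding \<Psi>_def
    by (rule measurable_restrict, subst measurable_cong_sets[OF refl sets_GG], rule kv)
  have PG: "\<And>k. prob_space (GG t s k)" using ts by (intro prob_space_GG)
  have dk: "distr M (GG t s k) (keyval k) = GG t s k" if k: "k \<in> I" for k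
  proof -
    have "distr M (GG t s k) (keyval k) = distr M (GG t s k) ((\<lambda>y. y k) \<circ> \<Psi>)"
      by (rule distr_cong) (auto simp: \<Psi>_def k)
    also have "\<dots> = distr (distr M (PiM I (GG t s)) \<Psi>) (GG t s k) (\<lambda>y. y k)"
      by (rule distr_distr[symmetric]) (auto intro: meas measurable_component_singleton k)
    also have "\<dots> = GG t s k" unfolding D
      by (rule distr_PiM_component[OF PG k])
    finally show ?thesis .
  qed
  show dist: "distributed M lborel (keyval k) (normal_density 0 (sdk t s k))" if k: "k \<in> I" for k
  proof -
    have "distr M lborel (keyval k) = distr M (GG t s k) (keyval k)"
      by (rule distr_cong) auto
    then have "distr M lborel (keyval k) = density lborel (normal_density 0 (sdk t s k))"
      using dk[OF k] by (simp add: GG_sdk)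
    moreover have "keyval k \<in> measurable M lborel" using kv[OF k] by simp
    ultimately show ?thesis unfolding distributed_def by auto
  qed
  assume ne: "I \<noteq> {}"
  define X where "X k = (if k \<in> I then keyval k else (\<lambda>_. 0::real))" for k
  have rvX: "random_variable borel (X k)" for k
    unfolding X_def using kv by auto
  have "indep_vars (\<lambda>_. borel) X I"
  proof (subst indep_vars_iff_distr_eq_PiM[OF ne rvX])
    have "distr M (PiM I (\<lambda>_. borel)) (\<lambda>x. \<lambda>i\<in>I. X i x) = distr M (PiM I (GG t s)) \<Psi>"
      by (rule distr_cong) (auto simp: \<Psi>_def X_def intro!: sets_PiM_cong)
    also have "\<dots> = PiM I (GG t s)" by (rule D)
    also have "\<dots> = PiM I (\<lambda>i. distr M borel (X i))"
    proof (rule PiM_cong)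
      fix i assume i: "i \<in> I"
      have "distr M borel (X i) = distr M (GG t s i) (keyval i)"
        by (rule distr_cong) (auto simp: X_def i)
      then show "GG t s i = distr M borel (X i)" using dk[OF i] by simp
    qed simp
    finally show "distr M (PiM I (\<lambda>_. borel)) (\<lambda>x. \<lambda>i\<in>I. X i x) = PiM I (\<lambda>i. distr M borel (X i))" .
  qed
  then show "indep_vars (\<lambda>_. borel) keyval I"
    by (rule indep_vars_cong[THEN iffD1, rotated 3]) (auto simp: X_def)
qed



context prob_space
begin

lemma lin_normal:
  fixes Y :: "'i \<Rightarrow> 'a \<Rightarrow> real" and sd w :: "'i \<Rightarrow> real"
  assumes ind: "indep_vars (\<lambda>_. borel) Y I" and J: "finite J" "J \<subseteq> I"
    and dist: "\<And>k. k \<in> I \<Longrightarrow> distributed M lborel (Y k) (normal_density 0 (sd k))"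
    and pos: "\<And>k. k \<in> I \<Longrightarrow> sd k > 0"
    and nz: "\<exists>k\<in>J. w k \<noteq> 0"
  shows "distributed M lborel (\<lambda>\<omega>. \<Sum>k\<in>J. w k * Y k \<omega>) (normal_density 0 (sqrt (\<Sum>k\<in>J. (w k * sd k)\<^sup>2)))"
proof -
  define J' where "J' = {k\<in>J. w k \<noteq> 0}"
  have J': "finite J'" "J' \<noteq> {}" "J' \<subseteq> I" using J nz by (auto simp: J'_def)
  have ind': "indep_vars (\<lambda>_. borel) (\<lambda>k \<omega>. w k * Y k \<omega>) J'"
    by (rule indep_vars_compose2[OF indep_vars_subset[OF ind J'(3)]]) simp
  have d': "distributed M lborel (\<lambda>\<omega>. w k * Y k \<omega>) (normal_density 0 (\<bar>w k\<bar> * sd k))" if k: "k \<in> J'" for k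
  proof -
    have "w k \<noteq> 0" "k \<in> I" using k J' by (auto simp: J'_def)
    from normal_density_affine[OF dist[OF \<open>k \<in> I\<close>] pos[OF \<open>k \<in> I\<close>] \<open>w k \<noteq> 0\<close>, of 0]
    show ?thesis by simp
  qed
  have pos': "\<And>k. k \<in> J' \<Longrightarrow> 0 < \<bar>w k\<bar> * sd k" using J' pos by (auto simp: J'_def)
  from sum_indep_normal[OF J'(1,2) ind' pos' d']
  have "distributed M lborel (\<lambda>\<omega>. \<Sum>k\<in>J'. w k * Y k \<omega>) (normal_density 0 (sqrt (\<Sum>k\<in>J'. (\<bar>w k\<bar> * sd k)\<^sup>2)))"
    by simp
  moreover have "(\<lambda>\<omega>. \<Sum>k\<in>J'. w k * Y k \<omega>) = (\<lambda>\<omega>. \<Sum>k\<in>J. w k * Y k \<omega>)"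
    unfolding J'_def using J by (intro ext sum.mono_neutral_left) auto
  moreover have "(\<Sum>k\<in>J'. (\<bar>w k\<bar> * sd k)\<^sup>2) = (\<Sum>k\<in>J. (w k * sd k)\<^sup>2)"
  proof -
    have "(\<Sum>k\<in>J'. (\<bar>w k\<bar> * sd k)\<^sup>2) = (\<Sum>k\<in>J'. (w k * sd k)\<^sup>2)"
      by (simp add: power_mult_distrib)
    also have "\<dots> = (\<Sum>k\<in>J. (w k * sd k)\<^sup>2)"
      unfolding J'_def using J by (intro sum.mono_neutral_left) auto
    finally show ?thesis .
  qed
  ultimately show ?thesis by simp
qed

lemma gauss_expect:
  assumes D: "distributed M lborel U (normal_density 0 v)" and v: "v > 0"
    and k: "1 + 2 * \<kappa> * v\<^sup>2 > 0"
  shows "(\<integral>\<^sup>+\<omega>. ennreal (exp (- \<kappa> * (U \<omega>)\<^sup>2)) \<partial>M) = ennreal (1 / sqrt (1 + 2 * \<kappa> * v\<^sup>2))"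
proof -
  have "(\<integral>\<^sup>+\<omega>. ennreal (exp (- \<kappa> * (U \<omega>)\<^sup>2)) \<partial>M)
      = (\<integral>\<^sup>+x. ennreal (normal_density 0 v x) * ennreal (exp (- \<kappa> * x\<^sup>2)) \<partial>lborel)"
    by (rule distributed_nn_integral[OF D, symmetric]) simp
  also have "\<dots> = ennreal (1 / sqrt (1 + 2 * \<kappa> * v\<^sup>2))" by (rule gauss_nn[OF v k])
  finally show ?thesis .
qed

lemma block_indep:
  fixes Y :: "'i \<Rightarrow> 'a \<Rightarrow> real" and g :: "'c \<Rightarrow> real \<Rightarrow> 'b::topological_space"
  assumes ind: "indep_vars (\<lambda>_. borel) Y I"
    and K: "\<And>c. c \<in> L \<Longrightarrow> K c \<subseteq> I" and disj: "disjoint_family_on K L"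
    and g: "\<And>c. c \<in> L \<Longrightarrow> g c \<in> borel_measurable borel"
  shows "indep_vars (\<lambda>_. borel) (\<lambda>c \<omega>. g c (\<Sum>k\<in>K c. w c k * Y k \<omega>)) L"
proof -
  have r: "indep_vars (\<lambda>c. PiM (K c) (\<lambda>_. borel)) (\<lambda>c \<omega>. restrict (\<lambda>k. Y k \<omega>) (K c)) L"
    by (rule indep_vars_restrict[OF ind K disj])
  have m: "(\<lambda>y. g c (\<Sum>k\<in>K c. w c k * y k)) \<in> measurable (PiM (K c) (\<lambda>_. borel)) borel" if c: "c \<in> L" for c
  proof -
    have "(\<lambda>y. \<Sum>k\<in>K c. w c k * y k) \<in> borel_measurable (PiM (K c) (\<lambda>_. borel))"
      by (intro borel_measurable_sum borel_measurable_times borel_measurable_const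
          measurable_component_singleton) 
    then show ?thesis using g[OF c] by (rule measurable_compose)
  qed
  have "indep_vars (\<lambda>_. borel) (\<lambda>c \<omega>. g c (\<Sum>k\<in>K c. w c k * restrict (\<lambda>k. Y k \<omega>) (K c) k)) L"
    by (rule indep_vars_compose2[OF r m])
  then show ?thesis
    by (rule indep_vars_cong[THEN iffD1, rotated 3]) auto
qed

end



lemma amgm_exp:
  fixes F G s \<Lambda> :: real
  assumes "\<Lambda> > 0" "s > 0" "F \<le> G"
  shows "1 \<le> (\<Lambda> * exp (- (s/2) * F) + exp ((s/2) * G) / \<Lambda>) / 2"
proof -
  define x where "x = exp (- (s/4) * F)"
  define y where "y = exp ((s/4) * G)"
  have x2: "x\<^sup>2 = exp (- (s/2) * F)" unfolding x_def power2_eq_square mult_exp_exp by simp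
  have y2: "y\<^sup>2 = exp ((s/2) * G)" unfolding y_def power2_eq_square mult_exp_exp by simp
  have "x * y = exp ((s/4) * (G - F))" unfolding x_def y_def mult_exp_exp by (simp add: algebra_simps)
  also have "\<dots> \<ge> 1" using assms by simp
  finally have xy: "1 \<le> x * y" .
  have "0 \<le> (sqrt \<Lambda> * x - y / sqrt \<Lambda>)\<^sup>2" by simp
  also have "\<dots> = \<Lambda> * x\<^sup>2 + y\<^sup>2 / \<Lambda> - 2 * x * y"
    using assms(1) by (simp add: power2_diff power_divide field_simps power2_eq_square)
  finally have "2 * x * y \<le> \<Lambda> * x\<^sup>2 + y\<^sup>2 / \<Lambda>" by simp
  with xy x2 y2 show ?thesis by simp
qed

context prob_space
begin

lemma chernoff2:
  fixes F G :: "'a \<Rightarrow> real"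
  assumes mF: "F \<in> borel_measurable M" and mG: "G \<in> borel_measurable M"
    and L: "\<Lambda> > 0" and s: "s > 0"
  shows "emeasure M {\<omega> \<in> space M. F \<omega> \<le> G \<omega>}
     \<le> ennreal (\<Lambda>/2) * (\<integral>\<^sup>+\<omega>. ennreal (exp (- (s/2) * F \<omega>)) \<partial>M)
       + ennreal (1/(2*\<Lambda>)) * (\<integral>\<^sup>+\<omega>. ennreal (exp ((s/2) * G \<omega>)) \<partial>M)"
proof -
  define S where "S = {\<omega> \<in> space M. F \<omega> \<le> G \<omega>}"
  have Sm: "S \<in> sets M" unfolding S_def using mF mG by measurable
  have "emeasure M S = (\<integral>\<^sup>+\<omega>. indicator S \<omega> \<partial>M)" using Sm by simp
  also have "\<dots> \<le> (\<integral>\<^sup>+\<omega>. ennreal (\<Lambda>/2) * ennreal (exp (- (s/2) * F \<omega>))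
                   + ennreal (1/(2*\<Lambda>)) * ennreal (exp ((s/2) * G \<omega>)) \<partial>M)"
  proof (rule nn_integral_mono)
    fix \<omega> assume "\<omega> \<in> space M"
    show "indicator S \<omega> \<le> ennreal (\<Lambda>/2) * ennreal (exp (- (s/2) * F \<omega>))
                   + ennreal (1/(2*\<Lambda>)) * ennreal (exp ((s/2) * G \<omega>))"
    proof (cases "\<omega> \<in> S")
      case True
      then have "F \<omega> \<le> G \<omega>" by (simp add: S_def)
      from amgm_exp[OF L s this]
      have "1 \<le> (\<Lambda>/2) * exp (- (s/2) * F \<omega>) + (1/(2*\<Lambda>)) * exp ((s/2) * G \<omega>)"
        by (simp add: field_simps)
      then have "ennreal 1 \<le> ennreal ((\<Lambda>/2) * exp (- (s/2) * F \<omega>) + (1/(2*\<Lambda>)) * exp ((s/2) * G \<omega>))"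
        by (rule ennreal_leI)
      also have "\<dots> = ennreal (\<Lambda>/2) * ennreal (exp (- (s/2) * F \<omega>))
                   + ennreal (1/(2*\<Lambda>)) * ennreal (exp ((s/2) * G \<omega>))"
      proof -
        have "ennreal ((\<Lambda>/2) * exp (- (s/2) * F \<omega>) + (1/(2*\<Lambda>)) * exp ((s/2) * G \<omega>))
            = ennreal ((\<Lambda>/2) * exp (- (s/2) * F \<omega>)) + ennreal ((1/(2*\<Lambda>)) * exp ((s/2) * G \<omega>))"
          using L by (intro ennreal_plus) auto
        also have "ennreal ((\<Lambda>/2) * exp (- (s/2) * F \<omega>)) = ennreal (\<Lambda>/2) * ennreal (exp (- (s/2) * F \<omega>))"
          using L by (intro ennreal_mult') auto
        also have "ennreal ((1/(2*\<Lambda>)) * exp ((s/2) * G \<omega>)) = ennreal (1/(2*\<Lambda>)) * ennreal (exp ((s/2) * G \<omega>))"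
          using L by (intro ennreal_mult') auto
        finally show ?thesis .
      qed
      finally show ?thesis using True by simp
    qed simp
  qed
  also have "\<dots> = ennreal (\<Lambda>/2) * (\<integral>\<^sup>+\<omega>. ennreal (exp (- (s/2) * F \<omega>)) \<partial>M)
       + ennreal (1/(2*\<Lambda>)) * (\<integral>\<^sup>+\<omega>. ennreal (exp ((s/2) * G \<omega>)) \<partial>M)"
    using mF mG by (subst nn_integral_add) (auto simp: nn_integral_cmult)
  finally show ?thesis unfolding S_def .
qed

lemma prod_expect:
  fixes U :: "nat \<Rightarrow> 'a \<Rightarrow> real"
  assumes ind: "indep_vars (\<lambda>_. borel) (\<lambda>c \<omega>. ennreal (exp (- \<kappa> * (U c \<omega>)\<^sup>2))) {..<d}"
    and e: "\<And>c. c < d \<Longrightarrow> (\<integral>\<^sup>+\<omega>. ennreal (exp (- \<kappa> * (U c \<omega>)\<^sup>2)) \<partial>M) = ennreal e"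
    and e0: "e \<ge> 0"
  shows "(\<integral>\<^sup>+\<omega>. ennreal (exp (- \<kappa> * (\<Sum>c<d. (U c \<omega>)\<^sup>2))) \<partial>M) = ennreal (e ^ d)"
proof -
  have "(\<integral>\<^sup>+\<omega>. ennreal (exp (- \<kappa> * (\<Sum>c<d. (U c \<omega>)\<^sup>2))) \<partial>M)
      = (\<integral>\<^sup>+\<omega>. (\<Prod>c<d. ennreal (exp (- \<kappa> * (U c \<omega>)\<^sup>2))) \<partial>M)"
    by (intro nn_integral_cong)
       (simp add: prod_ennreal exp_sum[symmetric] sum_distrib_left sum_negf)
  also have "\<dots> = (\<Prod>c<d. \<integral>\<^sup>+\<omega>. ennreal (exp (- \<kappa> * (U c \<omega>)\<^sup>2)) \<partial>M)"
    by (rule indep_vars_nn_integral[OF _ ind]) auto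
  also have "\<dots> = (\<Prod>c<d. ennreal e)" by (intro prod.cong refl) (rule e, simp)
  also have "\<dots> = ennreal (e ^ d)" using e0 by (simp add: prod_ennreal ennreal_power)
  finally show ?thesis .
qed

end



definition Kc :: "nat \<Rightarrow> nat \<Rightarrow> (nat \<times> nat + nat \<times> nat) set" where
  "Kc n c = Inl ` ((\<lambda>l0. (l0, c)) ` {1,2}) \<union> Inr ` ((\<lambda>m. (m, c)) ` {1..n})"

definition cnt :: "(nat \<Rightarrow> nat) \<Rightarrow> nat set \<Rightarrow> nat \<Rightarrow> real" where
  "cnt z D l0 = (\<Sum>m\<in>D. if z m = l0 then 1 else 0)"

definition wt :: "(nat \<Rightarrow> nat) \<Rightarrow> nat \<Rightarrow> nat set \<Rightarrow> (nat \<times> nat + nat \<times> nat) \<Rightarrow> real" where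
  "wt z i D k = (case k of
      Inl (l0, _) \<Rightarrow> (if z i = l0 then 1 else 0) - cnt z D l0 / real (card D)
    | Inr (m, _) \<Rightarrow> (if m = i then 1 else 0) - (if m \<in> D then 1 else 0) / real (card D))"

lemma sum_Kc:
  "(\<Sum>k\<in>Kc n c. f k) = f (Inl (1, c)) + f (Inl (2, c)) + (\<Sum>m\<in>{1..n}. f (Inr (m, c)))"
proof -
  have "(\<Sum>k\<in>Kc n c. f k) = (\<Sum>k\<in>Inl ` ((\<lambda>l0. (l0, c)) ` {1,2}). f k) + (\<Sum>k\<in>Inr ` ((\<lambda>m. (m, c)) ` {1..n}). f k)"
    unfolding Kc_def by (rule sum.union_disjoint) auto
  also have "(\<Sum>k\<in>Inl ` ((\<lambda>l0. (l0, c)) ` {1,2}). f k) = f (Inl (1, c)) + f (Inl (2, c))"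
    by simp
  also have "(\<Sum>k\<in>Inr ` ((\<lambda>m. (m, c)) ` {1..n}). f k) = (\<Sum>m\<in>{1..n}. f (Inr (m, c)))"
    by (subst sum.reindex) (auto simp: inj_on_def sum.reindex)
  finally show ?thesis .
qed

lemma Kc_sub: "c < d \<Longrightarrow> Kc n c \<subseteq> Inl ` ({1,2} \<times> {..<d}) \<union> Inr ` ({1..n} \<times> {..<d})"
  unfolding Kc_def by auto

lemma Kc_disj: "disjoint_family_on (Kc n) L"
  unfolding Kc_def disjoint_family_on_def by auto

lemma finite_Kc: "finite (Kc n c)"
  unfolding Kc_def by auto

lemma sum_ind_D:
  fixes g :: "nat \<Rightarrow> real"
  assumes "D \<subseteq> {1..n}"
  shows "(\<Sum>m\<in>{1..n}. (if m \<in> D then 1 else 0) / r * g m) = (\<Sum>m\<in>D. g m) / r"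
proof -
  have "(\<Sum>m\<in>{1..n}. (if m \<in> D then 1 else 0) / r * g m) = (\<Sum>m\<in>{1..n}. if m \<in> D then g m / r else 0)"
    by (intro sum.cong) auto
  also have "\<dots> = (\<Sum>m\<in>{1..n} \<inter> D. g m / r)" by (rule sum.inter_restrict[symmetric]) simp
  also have "{1..n} \<inter> D = D" using assms by auto
  finally show ?thesis by (simp add: sum_divide_distrib)
qed

lemma lin_repr:
  assumes D: "D \<subseteq> {1..n}" and i: "i \<in> {1..n}" and z: "\<forall>m\<in>{1..n}. z m \<in> {1,2}"
  shows "datum z \<omega> i c - centroid (datum z \<omega>) D c = (\<Sum>k\<in>Kc n c. wt z i D k * keyval k \<omega>)"
proof -
  define r where "r = real (card D)"
  define a1 where "a1 = fst \<omega> (1, c)"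
  define a2 where "a2 = fst \<omega> (2, c)"
  define g where "g m = snd \<omega> (m, c)" for m
  have zi: "fst \<omega> (z i, c) = (if z i = 1 then 1 else 0) * a1 + (if z i = 2 then 1 else 0) * a2"
    using z i unfolding a1_def a2_def by auto
  have zm: "(\<Sum>m\<in>D. fst \<omega> (z m, c)) = cnt z D 1 * a1 + cnt z D 2 * a2"
  proof -
    have "(\<Sum>m\<in>D. fst \<omega> (z m, c)) = (\<Sum>m\<in>D. (if z m = 1 then 1 else 0) * a1 + (if z m = 2 then 1 else 0) * a2)"
      using z D unfolding a1_def a2_def by (intro sum.cong) auto
    also have "\<dots> = cnt z D 1 * a1 + cnt z D 2 * a2"
      unfolding cnt_def by (simp add: sum.distrib sum_distrib_right)
    finally show ?thesis .
  qed
  have s2: "(\<Sum>m\<in>{1..n}. wt z i D (Inr (m, c)) * keyval (Inr (m, c)) \<omega>) = g i - (\<Sum>m\<in>D. g m) / r"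
  proof -
    have "(\<Sum>m\<in>{1..n}. wt z i D (Inr (m, c)) * keyval (Inr (m, c)) \<omega>)
        = (\<Sum>m\<in>{1..n}. (if m = i then 1 else 0) * g m) - (\<Sum>m\<in>{1..n}. (if m \<in> D then 1 else 0) / r * g m)"
      unfolding wt_def keyval_def g_def r_def by (simp add: left_diff_distrib sum_subtractf)
    also have "(\<Sum>m\<in>{1..n}. (if m = i then 1 else 0) * g m) = g i"
    proof -
      have "(\<Sum>m\<in>{1..n}. (if m = i then 1 else 0) * g m) = (\<Sum>m\<in>{1..n}. if m = i then g m else 0)"
        by (intro sum.cong) auto
      then show ?thesis using i by simp
    qed
    also have "(\<Sum>m\<in>{1..n}. (if m \<in> D then 1 else 0) / r * g m) = (\<Sum>m\<in>D. g m) / r"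
      by (rule sum_ind_D[OF D])
    finally show ?thesis .
  qed
  have "(\<Sum>k\<in>Kc n c. wt z i D k * keyval k \<omega>)
      = ((if z i = 1 then 1 else 0) - cnt z D 1 / r) * a1 + ((if z i = 2 then 1 else 0) - cnt z D 2 / r) * a2
        + (g i - (\<Sum>m\<in>D. g m) / r)"
    unfolding sum_Kc s2 by (simp add: wt_def keyval_def a1_def a2_def r_def)
  also have "\<dots> = fst \<omega> (z i, c) + g i - ((\<Sum>m\<in>D. fst \<omega> (z m, c)) + (\<Sum>m\<in>D. g m)) / r"
    unfolding zi zm by (simp add: field_simps add_divide_distrib diff_divide_distrib)
  also have "\<dots> = datum z \<omega> i c - centroid (datum z \<omega>) D c"
    unfolding datum_def centroid_def g_def r_def by (simp add: sum.distrib)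
  finally show ?thesis by simp
qed



lemma cnt_sum:
  assumes "\<forall>m\<in>D. z m \<in> {1,2}"
  shows "cnt z D 1 + cnt z D 2 = real (card D)"
proof -
  have "cnt z D 1 + cnt z D 2 = (\<Sum>m\<in>D. (if z m = 1 then 1 else 0) + (if z m = 2 then 1 else 0))"
    unfolding cnt_def by (simp add: sum.distrib)
  also have "\<dots> = (\<Sum>m\<in>D. 1)" using assms by (intro sum.cong) auto
  finally show ?thesis by simp
qed

lemma cnt_card:
  assumes "D \<subseteq> {1..n}"
  shows "cnt z D l = real (card (D \<inter> true_class n z l))"
proof -
  have fin: "finite D" using assms finite_subset by blast
  have "D \<inter> true_class n z l = {m\<in>D. z m = l}" using assms by (auto simp: true_class_def)
  moreover have "real (card {m\<in>D. z m = l}) = (\<Sum>m\<in>{m\<in>D. z m = l}. 1)" by simp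
  moreover have "(\<Sum>m\<in>{m\<in>D. z m = l}. (1::real)) = cnt z D l"
    unfolding cnt_def using fin by (subst sum.inter_filter) auto
  ultimately show ?thesis by simp
qed

lemma inr_sq:
  fixes n :: nat
  assumes D: "D \<subseteq> {1..n}" "D \<noteq> {}" and i: "i \<in> {1..n}"
  defines "r \<equiv> real (card D)"
  shows "(\<Sum>m\<in>{1..n}. ((if m = i then 1 else 0) - (if m \<in> D then 1 else 0) / r)\<^sup>2)
       = (if i \<in> D then 1 - 1/r else 1 + 1/r)"
proof -
  have fin: "finite D" using D finite_subset by blast
  have "card D \<ge> 1" using D fin by (simp add: Suc_le_eq card_gt_0_iff)
  then have r: "r \<ge> 1" by (simp add: r_def)
  have pw: "((if m = i then 1 else 0) - (if m \<in> D then 1 else 0) / r)\<^sup>2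
      = (if m = i then 1 - (if i \<in> D then 2/r else 0) else 0) + (if m \<in> D then 1/r\<^sup>2 else 0)" for m
    by (auto simp: power2_diff power_divide)
  have "(\<Sum>m\<in>{1..n}. ((if m = i then 1 else 0) - (if m \<in> D then 1 else 0) / r)\<^sup>2)
      = (\<Sum>m\<in>{1..n}. (if m = i then 1 - (if i \<in> D then 2/r else 0) else 0)) + (\<Sum>m\<in>{1..n}. (if m \<in> D then 1/r\<^sup>2 else 0))"
    unfolding pw by (simp add: sum.distrib)
  also have "(\<Sum>m\<in>{1..n}. (if m = i then 1 - (if i \<in> D then 2/r else 0) else 0)) = 1 - (if i \<in> D then 2/r else 0)"
    using i by simp
  also have "(\<Sum>m\<in>{1..n}. (if m \<in> D then 1/r\<^sup>2 else 0)) = (\<Sum>m\<in>{1..n} \<inter> D. 1/r\<^sup>2)"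
    by (rule sum.inter_restrict[symmetric]) simp
  also have "{1..n} \<inter> D = D" using D by auto
  also have "(\<Sum>m\<in>D. 1/r\<^sup>2) = 1/r" using r by (simp add: r_def power2_eq_square)
  finally show ?thesis using r by (auto simp: field_simps)
qed

lemma var_repr:
  assumes D: "D \<subseteq> {1..n}" "D \<noteq> {}" and i: "i \<in> {1..n}" and z: "\<forall>m\<in>{1..n}. z m \<in> {1,2}"
    and l: "l \<in> {1,2}" "z i = l"
  defines "r \<equiv> real (card D)" and "h \<equiv> real (card (D \<inter> true_class n z l))"
  shows "(\<Sum>k\<in>Kc n c. (wt z i D k * sdk t s k)\<^sup>2)
       = t\<^sup>2 * (2 * (1 - h / r)\<^sup>2) + s\<^sup>2 * (if i \<in> D then 1 - 1/r else 1 + 1/r)"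
proof -
  have fin: "finite D" using D finite_subset by blast
  have r: "r > 0" using D fin by (simp add: r_def card_gt_0_iff)
  have cs: "cnt z D 1 + cnt z D 2 = r" unfolding r_def using z D by (intro cnt_sum) auto
  have hc: "h = cnt z D l" unfolding h_def by (rule cnt_card[OF D(1), symmetric])
  have inl: "(wt z i D (Inl (1, c)) * t)\<^sup>2 + (wt z i D (Inl (2, c)) * t)\<^sup>2 = t\<^sup>2 * (2 * (1 - h / r)\<^sup>2)"
  proof (cases "l = 1")
    case True
    then have "z i = 1" using l by simp
    then have e: "wt z i D (Inl (1, c)) = 1 - h / r" "wt z i D (Inl (2, c)) = - (1 - h / r)"
      unfolding wt_def using hc True cs r by (auto simp: r_def field_simps)
    show ?thesis unfolding e by (simp add: power_mult_distrib power2_eq_square algebra_simps)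
  next
    case False
    then have "l = 2" "z i = 2" using l by auto
    then have e: "wt z i D (Inl (2, c)) = 1 - h / r" "wt z i D (Inl (1, c)) = - (1 - h / r)"
      unfolding wt_def using hc cs r by (auto simp: r_def field_simps)
    show ?thesis unfolding e by (simp add: power_mult_distrib power2_eq_square algebra_simps)
  qed
  have inr: "(\<Sum>m\<in>{1..n}. (wt z i D (Inr (m, c)) * sdk t s (Inr (m, c)))\<^sup>2)
     = s\<^sup>2 * (if i \<in> D then 1 - 1/r else 1 + 1/r)"
  proof -
    have "(\<Sum>m\<in>{1..n}. (wt z i D (Inr (m, c)) * sdk t s (Inr (m, c)))\<^sup>2)
        = s\<^sup>2 * (\<Sum>m\<in>{1..n}. ((if m = i then 1 else 0) - (if m \<in> D then 1 else 0) / r)\<^sup>2)"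
      unfolding wt_def sdk_def r_def by (simp add: sum_distrib_left power_mult_distrib mult.commute)
    also have "\<dots> = s\<^sup>2 * (if i \<in> D then 1 - 1/r else 1 + 1/r)"
      unfolding r_def using inr_sq[OF D i] by simp
    finally show ?thesis .
  qed
  show ?thesis unfolding sum_Kc using inl inr by (simp add: sdk_def)
qed



lemma model_eq: "model n d t s = PiM ({1,2} \<times> {..<d}) (\<lambda>_. gauss1 t) \<Otimes>\<^sub>M PiM ({1..n} \<times> {..<d}) (\<lambda>_. gauss1 s)"
  by (simp add: model_def)

lemma lin_meas:
  assumes "c < d"
  shows "(\<lambda>\<omega>. \<Sum>k\<in>Kc n c. w k * keyval k \<omega>) \<in> borel_measurable (model n d t s)"
proof -
  have "keyval k \<in> borel_measurable (model n d t s)" if "k \<in> Kc n c" for k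
    unfolding model_eq by (rule keyval_meas) (use Kc_sub[OF assms] that in blast)
  then show ?thesis
    by (intro borel_measurable_sum borel_measurable_times borel_measurable_const) auto
qed

lemma coord_integral:
  fixes n d :: nat and t s \<kappa> :: real and z :: "nat \<Rightarrow> nat"
  assumes ts: "t > 0" "s > 0"
    and D: "D \<subseteq> {1..n}" "D \<noteq> {}" and i: "i \<in> {1..n}" and z: "\<forall>m\<in>{1..n}. z m \<in> {1,2}"
    and l: "l \<in> {1,2}" "z i = l"
    and nz: "i \<in> D \<Longrightarrow> card D \<ge> 2"
  defines "r \<equiv> real (card D)" and "h \<equiv> real (card (D \<inter> true_class n z l))"
  defines "v \<equiv> t\<^sup>2 * (2 * (1 - h / r)\<^sup>2) + s\<^sup>2 * (if i \<in> D then 1 - 1/r else 1 + 1/r)"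
  assumes k: "1 + 2 * \<kappa> * v > 0"
  shows "v > 0"
    and "(\<integral>\<^sup>+\<omega>. ennreal (exp (- \<kappa> * (\<Sum>c<d. (\<Sum>k\<in>Kc n c. wt z i D k * keyval k \<omega>)\<^sup>2))) \<partial>model n d t s)
       = ennreal ((1 / sqrt (1 + 2 * \<kappa> * v)) ^ d)"
proof -
  have fin: "finite D" using D finite_subset by blast
  have r1: "r \<ge> 1" using fin D by (simp add: r_def Suc_le_eq card_gt_0_iff)
  have "s\<^sup>2 * (if i \<in> D then 1 - 1/r else 1 + 1/r) > 0"
  proof (cases "i \<in> D")
    case True
    then have "r \<ge> 2" using nz by (simp add: r_def)
    then have "1 - 1/r > 0" by (simp add: field_simps)
    then show ?thesis using True ts by simp
  next
    case False
    then show ?thesis using ts r1 by (simp add: add_pos_nonneg)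
  qed
  then show vpos: "v > 0" unfolding v_def by (simp add: add_nonneg_pos)
  let ?M = "model n d t s"
  let ?I = "Inl ` ({1,2::nat} \<times> {..<d}) \<union> Inr ` ({1..n} \<times> {..<d})"
  have PS: "prob_space ?M" unfolding model_eq by (rule model_facts(1)) (use ts in auto)
  interpret prob_space ?M by (rule PS)
  have dist: "\<And>k. k \<in> ?I \<Longrightarrow> distributed ?M lborel (keyval k) (normal_density 0 (sdk t s k))"
    unfolding model_eq by (rule model_facts(2)) (use ts in auto)
  show "(\<integral>\<^sup>+\<omega>. ennreal (exp (- \<kappa> * (\<Sum>c<d. (\<Sum>k\<in>Kc n c. wt z i D k * keyval k \<omega>)\<^sup>2))) \<partial>model n d t s)
       = ennreal ((1 / sqrt (1 + 2 * \<kappa> * v)) ^ d)"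
  proof (cases "d = 0")
    case True
    have "emeasure ?M (space ?M) = 1" by (rule emeasure_space_1)
    with True show "(\<integral>\<^sup>+\<omega>. ennreal (exp (- \<kappa> * (\<Sum>c<d. (\<Sum>k\<in>Kc n c. wt z i D k * keyval k \<omega>)\<^sup>2))) \<partial>model n d t s)
       = ennreal ((1 / sqrt (1 + 2 * \<kappa> * v)) ^ d)" by simp
  next
    case False
    then have Ine: "?I \<noteq> {}" by auto
    have ind: "indep_vars (\<lambda>_. borel) keyval ?I"
      unfolding model_eq by (rule model_facts(3)) (use ts Ine in auto)
    define U where "U c \<omega> = (\<Sum>k\<in>Kc n c. wt z i D k * keyval k \<omega>)" for c \<omega>
    have indU: "indep_vars (\<lambda>_. borel) (\<lambda>c \<omega>. ennreal (exp (- \<kappa> * (U c \<omega>)\<^sup>2))) {..<d}"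
      unfolding U_def
      by (rule block_indep[OF ind, where g="\<lambda>c x. ennreal (exp (- \<kappa> * x\<^sup>2))"])
         (use Kc_sub Kc_disj in auto)
    have eU: "(\<integral>\<^sup>+\<omega>. ennreal (exp (- \<kappa> * (U c \<omega>)\<^sup>2)) \<partial>?M) = ennreal (1 / sqrt (1 + 2 * \<kappa> * v))"
      if c: "c < d" for c
    proof -
      have nzw: "\<exists>k\<in>Kc n c. wt z i D k \<noteq> 0"
      proof (intro bexI)
        show "Inr (i, c) \<in> Kc n c" using i by (auto simp: Kc_def)
        show "wt z i D (Inr (i, c)) \<noteq> 0"
        proof (cases "i \<in> D")
          case True
          then have "r \<ge> 2" using nz by (simp add: r_def)
          then show ?thesis using True by (simp add: wt_def r_def[symmetric] field_simps)
        next
          case False then show ?thesis by (simp add: wt_def)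
        qed
      qed
      have var: "(\<Sum>k\<in>Kc n c. (wt z i D k * sdk t s k)\<^sup>2) = v"
        unfolding v_def r_def h_def by (rule var_repr[OF D i z l])
      have sdpos: "\<And>k. k \<in> ?I \<Longrightarrow> sdk t s k > 0" using ts by (auto simp: sdk_def split: sum.split)
      have dU: "distributed ?M lborel (U c) (normal_density 0 (sqrt v))"
        unfolding U_def using lin_normal[OF ind finite_Kc Kc_sub[OF c] dist sdpos nzw] var by simp
      have "(sqrt v)\<^sup>2 = v" using vpos by simp
      then show ?thesis using gauss_expect[OF dU _, of \<kappa>] vpos k by simp
    qed
    have "(\<integral>\<^sup>+\<omega>. ennreal (exp (- \<kappa> * (\<Sum>c<d. (U c \<omega>)\<^sup>2))) \<partial>?M) = ennreal ((1 / sqrt (1 + 2 * \<kappa> * v)) ^ d)"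
      by (rule prod_expect[OF indU eU]) (use k in simp_all)
    then show "(\<integral>\<^sup>+\<omega>. ennreal (exp (- \<kappa> * (\<Sum>c<d. (\<Sum>k\<in>Kc n c. wt z i D k * keyval k \<omega>)\<^sup>2))) \<partial>model n d t s)
       = ennreal ((1 / sqrt (1 + 2 * \<kappa> * v)) ^ d)" unfolding U_def .
  qed
qed



lemma final_arith:
  fixes P R s u v \<Lambda> :: real and d :: nat
  assumes PR: "P > R" "R > 0"
  defines "s \<equiv> (P - R) / (2 * P * R)"
  defines "u \<equiv> 1 + s * P" and "v \<equiv> 1 - s * R"
  defines "\<Lambda> \<equiv> (u / v) powr (real d / 4)"
  shows "s > 0" "u > 0" "v > 0" "\<Lambda> > 0"
    and "\<Lambda> / 2 * (1 / sqrt u) ^ d + 1 / (2 * \<Lambda>) * (1 / sqrt v) ^ d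
         = (1 - ((P - R) / (P + R))\<^sup>2) powr (real d / 4)"
proof -
  have P: "P > 0" using PR by simp
  show s: "s > 0" unfolding s_def using PR P by simp
  have u: "u = (P + R) / (2 * R)" unfolding u_def s_def using P PR by (simp add: field_simps)
  have v: "v = (P + R) / (2 * P)" unfolding v_def s_def using P PR by (simp add: field_simps)
  show up: "u > 0" using u P PR by simp
  show vp: "v > 0" using v P PR by simp
  show Lp: "\<Lambda> > 0" unfolding \<Lambda>_def using up vp by simp
  define A where "A = u powr (real d / 4)"
  define B where "B = v powr (real d / 4)"
  have A: "A > 0" "B > 0" using up vp by (auto simp: A_def B_def)
  have L: "\<Lambda> = A / B" unfolding \<Lambda>_def A_def B_def using up vp by (simp add: powr_divide)
  have su: "(1 / sqrt u) ^ d = 1 / A\<^sup>2"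
  proof -
    have "A\<^sup>2 = u powr (real d / 2)" unfolding A_def using up
      by (simp add: power2_eq_square powr_add[symmetric])
    also have "\<dots> = (u powr (1/2)) powr (real d)" using up by (simp add: powr_powr)
    also have "\<dots> = (sqrt u) ^ d" using up by (simp add: powr_half_sqrt powr_realpow)
    finally show ?thesis by (simp add: power_one_over)
  qed
  have sv: "(1 / sqrt v) ^ d = 1 / B\<^sup>2"
  proof -
    have "B\<^sup>2 = v powr (real d / 2)" unfolding B_def using vp
      by (simp add: power2_eq_square powr_add[symmetric])
    also have "\<dots> = (v powr (1/2)) powr (real d)" using vp by (simp add: powr_powr)
    also have "\<dots> = (sqrt v) ^ d" using vp by (simp add: powr_half_sqrt powr_realpow)
    finally show ?thesis by (simp add: power_one_over)
  qed
  have "\<Lambda> / 2 * (1 / sqrt u) ^ d + 1 / (2 * \<Lambda>) * (1 / sqrt v) ^ d = 1 / (A * B)"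
    unfolding L su sv using A by (simp add: field_simps power2_eq_square)
  also have "A * B = (u * v) powr (real d / 4)" unfolding A_def B_def using up vp by (simp add: powr_mult)
  also have "1 / \<dots> = (1 / (u * v)) powr (real d / 4)" using up vp by (simp add: powr_divide)
  also have "1 / (u * v) = 1 - ((P - R) / (P + R))\<^sup>2"
  proof -
    have pr: "P + R \<noteq> 0" using P PR by simp
    have "1 - ((P - R) / (P + R))\<^sup>2 = ((P + R)\<^sup>2 - (P - R)\<^sup>2) / (P + R)\<^sup>2"
      using pr by (simp only: power_divide) (simp add: field_simps)
    also have "\<dots> = (4 * P * R) / (P + R)\<^sup>2" by (simp add: power2_eq_square algebra_simps)
    also have "\<dots> = 1 / (u * v)" unfolding u v using P PR pr by (simp add: power2_eq_square field_simps)
    finally show ?thesis by simp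
  qed
  finally show "\<Lambda> / 2 * (1 / sqrt u) ^ d + 1 / (2 * \<Lambda>) * (1 / sqrt v) ^ d
         = (1 - ((P - R) / (P + R))\<^sup>2) powr (real d / 4)" .
qed



theorem corollary3p10:
  fixes n d :: nat and \<tau> \<sigma> :: real and z :: "nat \<Rightarrow> nat" and C :: "nat \<Rightarrow> nat set"
    and i l j :: nat
  assumes "n \<ge> 2" and "d \<ge> 1" and "\<tau> > 0" and "\<sigma> > 0"
    and "\<forall>i\<in>{1..n}. z i \<in> {1,2}"
    and "true_class n z 1 \<noteq> {}" and "true_class n z 2 \<noteq> {}"
    and "C 1 \<union> C 2 = {1..n}" and "C 1 \<inter> C 2 = {}"
    and "C 1 \<noteq> {}" and "C 2 \<noteq> {}"
    and "i \<in> {1..n}" and "l \<in> {1,2}" and "j \<in> {1,2}"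
    and "i \<in> true_class n z l" and "i \<in> C j"
    and "0 < Rfrac n z C l j"
    and "Rfrac n z C l j \<le> Rfrac n z C l (other j)"
    and "Rfrac n z C l (other j) \<le> 1"
  shows "measure (model n d \<tau> \<sigma>)
           {\<omega> \<in> space (model n d \<tau> \<sigma>). hartigan_fixed_point d (datum z \<omega>) C}
         \<le> rho \<tau> \<sigma> C (Rfrac n z C l j) (Rfrac n z C l (other j)) j powr (real d / 4)"
proof -
  let ?M = "model n d \<tau> \<sigma>"
  define jb where "jb = other j"
  have jb: "jb \<in> {1,2}" "jb \<noteq> j" using assms(14) by (auto simp: jb_def other_def)
  have Cu: "C j \<union> C jb = {1..n}" and Ci: "C j \<inter> C jb = {}"
    using assms(8,9,14) by (auto simp: jb_def other_def)
  have CS: "C j \<subseteq> {1..n}" "C jb \<subseteq> {1..n}" using Cu by auto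
  have Cne: "C j \<noteq> {}" "C jb \<noteq> {}" using assms(10,11,14) jb by auto
  have fin: "finite (C j)" "finite (C jb)" using CS finite_subset by auto
  have zi: "z i = l" using assms(15) by (simp add: true_class_def)
  have iCj: "i \<in> C j" by (rule assms(16))
  have iCb: "i \<notin> C jb" using Ci iCj by auto
  define p where "p = real (card (C j))"
  define q where "q = real (card (C jb))"
  define hj where "hj = real (card (C j \<inter> true_class n z l))"
  define hb where "hb = real (card (C jb \<inter> true_class n z l))"
  have Rj: "Rfrac n z C l j = hj / p" by (simp add: Rfrac_def hj_def p_def)
  have Rb: "Rfrac n z C l (other j) = hb / q" by (simp add: Rfrac_def hb_def q_def jb_def)
  have hjp: "hj \<le> p" unfolding hj_def p_def using fin by (simp add: card_mono)
  have hbq: "hb \<le> q" unfolding hb_def q_def using fin by (simp add: card_mono)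
  have p1: "p \<ge> 1" unfolding p_def using fin Cne by (simp add: Suc_le_eq card_gt_0_iff)
  have q1: "q \<ge> 1" unfolding q_def using fin Cne by (simp add: Suc_le_eq card_gt_0_iff)
  have Rlt: "hj / p < 1"
  proof (rule ccontr)
    assume "\<not> hj / p < 1"
    then have "hj \<ge> p" using p1 by (simp add: field_simps)
    then have hjeq: "hj = p" using hjp by simp
    then have "hb / q \<ge> 1" using assms(18) Rj Rb p1 by simp
    then have "hb \<ge> q" using q1 by (simp add: field_simps)
    then have hbeq: "hb = q" using hbq by simp
    have e1: "C j \<inter> true_class n z l = C j"
      using hjeq fin by (intro card_subset_eq) (auto simp: hj_def p_def)
    have e2: "C jb \<inter> true_class n z l = C jb"
      using hbeq fin by (intro card_subset_eq) (auto simp: hb_def q_def)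
    have all: "{1..n} \<subseteq> true_class n z l" using e1 e2 Cu by blast
    have "true_class n z (3 - l) \<noteq> {}" using assms(6,7,13) by auto
    then obtain m where m: "m \<in> true_class n z (3 - l)" by auto
    then have "m \<in> {1..n}" "z m = 3 - l" by (auto simp: true_class_def)
    moreover have "z m = l" using all \<open>m \<in> {1..n}\<close> by (auto simp: true_class_def)
    ultimately show False using assms(13) by auto
  qed
  have p2: "p \<ge> 2"
  proof (rule ccontr)
    assume "\<not> p \<ge> 2"
    then have "card (C j) < 2" by (simp add: p_def)
    then have pe: "p = 1" using p1 by (simp add: p_def)
    have "i \<in> C j \<inter> true_class n z l" using iCj assms(15) by simp
    then have "card (C j \<inter> true_class n z l) \<ge> 1" using fin by (simp add: Suc_le_eq card_gt_0_iff) blast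
    then have "hj \<ge> 1" by (simp add: hj_def)
    then show False using Rlt pe hjp by simp
  qed
  have card2: "card (C j) > 1" using p2 by (simp add: p_def)
  have card2': "card (C j) \<ge> 2" using card2 by simp

  define \<alpha> where "\<alpha> = p / (p - 1)"
  define \<beta> where "\<beta> = q / (q + 1)"
  define a where "a = \<alpha> * (1 - hj / p)\<^sup>2"
  define b where "b = \<beta> * (1 - hb / q)\<^sup>2"
  define vU where "vU = \<tau>\<^sup>2 * (2 * (1 - hj / p)\<^sup>2) + \<sigma>\<^sup>2 * (1 - 1 / p)"
  define vV where "vV = \<tau>\<^sup>2 * (2 * (1 - hb / q)\<^sup>2) + \<sigma>\<^sup>2 * (1 + 1 / q)"
  define P where "P = \<alpha> * vU"
  define R where "R = \<beta> * vV"
  have \<alpha>1: "\<alpha> * (1 - 1/p) = 1" using p2 by (simp add: \<alpha>_def field_simps)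
  have \<beta>1: "\<beta> * (1 + 1/q) = 1"
  proof -
    have "1 + 1/q = (q + 1) / q" using q1 by (simp add: field_simps)
    then show ?thesis using q1 by (simp add: \<beta>_def)
  qed
  have Peq: "P = 2 * \<tau>\<^sup>2 * a + \<sigma>\<^sup>2"
  proof -
    have "P = 2 * \<tau>\<^sup>2 * a + \<sigma>\<^sup>2 * (\<alpha> * (1 - 1/p))"
      unfolding P_def vU_def a_def by (simp add: algebra_simps)
    then show ?thesis using \<alpha>1 by simp
  qed
  have Req: "R = 2 * \<tau>\<^sup>2 * b + \<sigma>\<^sup>2"
  proof -
    have "R = 2 * \<tau>\<^sup>2 * b + \<sigma>\<^sup>2 * (\<beta> * (1 + 1/q))"
      unfolding R_def vV_def b_def by (simp add: algebra_simps)
    then show ?thesis using \<beta>1 by simp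
  qed
  have Rb1: "hb / q \<le> 1" using assms(19) Rb by simp
  have RjRb: "hj / p \<le> hb / q" using assms(18) Rj Rb by simp
  have ab: "a > b"
  proof -
    have x0: "0 < 1 - hj / p" using Rlt by simp
    have x1: "0 \<le> 1 - hb / q" "1 - hb / q \<le> 1 - hj / p" using Rb1 RjRb by auto
    have "\<alpha> > 1" using p2 by (simp add: \<alpha>_def field_simps)
    have "\<beta> < 1" "\<beta> > 0" using q1 by (auto simp: \<beta>_def field_simps)
    have "b \<le> (1 - hb / q)\<^sup>2" unfolding b_def using \<open>\<beta> < 1\<close> \<open>\<beta> > 0\<close>
      by (intro mult_left_le_one_le) auto
    also have "\<dots> \<le> (1 - hj / p)\<^sup>2" using x1 by (intro power_mono) auto
    also have "\<dots> < a" unfolding a_def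
    proof -
      have "(1 - hj / p)\<^sup>2 > 0" using x0 by (intro zero_less_power) 
      then show "(1 - hj / p)\<^sup>2 < \<alpha> * (1 - hj / p)\<^sup>2" using \<open>\<alpha> > 1\<close> by simp
    qed
    finally show ?thesis .
  qed
  have b0: "b \<ge> 0" unfolding b_def using q1 by (simp add: \<beta>_def)
  have PR: "P > R" "R > 0" using ab b0 assms(3,4) Peq Req by (auto intro: add_nonneg_pos)
  define s where "s = (P - R) / (2 * P * R)"
  define u where "u = 1 + s * P"
  define v where "v = 1 - s * R"
  define \<Lambda> where "\<Lambda> = (u / v) powr (real d / 4)"
  note FA123 = final_arith(1-3)[OF PR, folded s_def, folded u_def v_def]
  note FA4 = final_arith(4)[OF PR, where d=d, folded s_def, folded u_def v_def, folded \<Lambda>_def]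
  note FA5 = final_arith(5)[OF PR, where d=d, folded s_def, folded u_def v_def, folded \<Lambda>_def]
  define U where "U c \<omega> = (\<Sum>k\<in>Kc n c. wt z i (C j) k * keyval k \<omega>)" for c \<omega>
  define V where "V c \<omega> = (\<Sum>k\<in>Kc n c. wt z i (C jb) k * keyval k \<omega>)" for c \<omega>
  define F where "F \<omega> = \<alpha> * (\<Sum>c<d. (U c \<omega>)\<^sup>2)" for \<omega>
  define G where "G \<omega> = \<beta> * (\<Sum>c<d. (V c \<omega>)\<^sup>2)" for \<omega>
  have mF: "F \<in> borel_measurable ?M"
    unfolding F_def U_def
    by (intro borel_measurable_times borel_measurable_const borel_measurable_sum borel_measurable_power lin_meas) auto
  have mG: "G \<in> borel_measurable ?M"
    unfolding G_def V_def
    by (intro borel_measurable_times borel_measurable_const borel_measurable_sum borel_measurable_power lin_meas) auto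
  have sq: "sqdist d (datum z \<omega> i) (centroid (datum z \<omega>) D) = (\<Sum>c<d. (\<Sum>k\<in>Kc n c. wt z i D k * keyval k \<omega>)\<^sup>2)"
    if "D \<subseteq> {1..n}" for D \<omega>
    unfolding sqdist_def using lin_repr[OF that assms(12) assms(5)] by simp
  have sub: "{\<omega> \<in> space ?M. hartigan_fixed_point d (datum z \<omega>) C} \<subseteq> {\<omega> \<in> space ?M. F \<omega> \<le> G \<omega>}"
  proof safe
    fix \<omega> assume "\<omega> \<in> space ?M" "hartigan_fixed_point d (datum z \<omega>) C"
    then have "hartigan_dist d (datum z \<omega>) i (C j) \<le> hartigan_dist d (datum z \<omega>) i (C (other j))"
      unfolding hartigan_fixed_point_def using assms(14) iCj card2 by blast
    moreover have "hartigan_dist d (datum z \<omega>) i (C j) = F \<omega>"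
      unfolding hartigan_dist_def F_def U_def \<alpha>_def p_def using iCj sq[OF CS(1)] by simp
    moreover have "hartigan_dist d (datum z \<omega>) i (C (other j)) = G \<omega>"
      unfolding hartigan_dist_def G_def V_def \<beta>_def q_def jb_def[symmetric] using iCb sq[OF CS(2)] by simp
    ultimately show "F \<omega> \<le> G \<omega>" by simp
  qed
  have PS: "prob_space ?M" unfolding model_eq by (rule model_facts(1)) (use assms(3,4) in auto)
  interpret prob_space ?M by (rule PS)
  have Sm: "{\<omega> \<in> space ?M. F \<omega> \<le> G \<omega>} \<in> sets ?M" using mF mG by measurable
  have I1: "(\<integral>\<^sup>+\<omega>. ennreal (exp (- (s/2) * F \<omega>)) \<partial>?M) = ennreal ((1 / sqrt u) ^ d)"
  proof -
    have "(\<integral>\<^sup>+\<omega>. ennreal (exp (- (s/2) * F \<omega>)) \<partial>?M)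
        = (\<integral>\<^sup>+\<omega>. ennreal (exp (- ((s/2) * \<alpha>) * (\<Sum>c<d. (\<Sum>k\<in>Kc n c. wt z i (C j) k * keyval k \<omega>)\<^sup>2))) \<partial>?M)"
      unfolding F_def U_def by (simp add: algebra_simps)
    also have "\<dots> = ennreal ((1 / sqrt (1 + 2 * ((s/2) * \<alpha>) * vU)) ^ d)"
    proof -
      have "1 + 2 * ((s/2) * \<alpha>) * vU = u" unfolding u_def P_def by (simp add: algebra_simps)
      then have k: "1 + 2 * ((s/2) * \<alpha>) * vU > 0" using FA123(2) by simp
      show ?thesis
        using coord_integral(2)[OF assms(3,4) CS(1) Cne(1) assms(12) assms(5) assms(13) zi _, of "(s/2) * \<alpha>" d]
          k iCj card2' by (simp add: vU_def hj_def[symmetric] p_def[symmetric])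
    qed
    also have "1 + 2 * ((s/2) * \<alpha>) * vU = u" unfolding u_def P_def by (simp add: algebra_simps)
    finally show ?thesis .
  qed
  have I2: "(\<integral>\<^sup>+\<omega>. ennreal (exp ((s/2) * G \<omega>)) \<partial>?M) = ennreal ((1 / sqrt v) ^ d)"
  proof -
    have "(\<integral>\<^sup>+\<omega>. ennreal (exp ((s/2) * G \<omega>)) \<partial>?M)
        = (\<integral>\<^sup>+\<omega>. ennreal (exp (- (- ((s/2) * \<beta>)) * (\<Sum>c<d. (\<Sum>k\<in>Kc n c. wt z i (C jb) k * keyval k \<omega>)\<^sup>2))) \<partial>?M)"
      unfolding G_def V_def by (simp add: algebra_simps)
    also have "\<dots> = ennreal ((1 / sqrt (1 + 2 * (- ((s/2) * \<beta>)) * vV)) ^ d)"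
    proof -
      have "1 + 2 * (- ((s/2) * \<beta>)) * vV = v" unfolding v_def R_def by (simp add: algebra_simps)
      then have k: "1 + 2 * (- ((s/2) * \<beta>)) * vV > 0" using FA123(3) by simp
      show ?thesis
        using coord_integral(2)[OF assms(3,4) CS(2) Cne(2) assms(12) assms(5) assms(13) zi _, of "- ((s/2) * \<beta>)" d]
          k iCb by (simp add: vV_def hb_def[symmetric] q_def[symmetric])
    qed
    also have "1 + 2 * (- ((s/2) * \<beta>)) * vV = v" unfolding v_def R_def by (simp add: algebra_simps)
    finally show ?thesis .
  qed
  have rho_eq: "rho \<tau> \<sigma> C (Rfrac n z C l j) (Rfrac n z C l (other j)) j = 1 - ((P - R) / (P + R))\<^sup>2"
  proof -
    have "(P - R) / (P + R) = (2 * (\<tau>\<^sup>2 * (a - b))) / (2 * (\<tau>\<^sup>2 * (a + b) + \<sigma>\<^sup>2))"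
      unfolding Peq Req by (simp add: algebra_simps)
    also have "\<dots> = (\<tau>\<^sup>2 * (a - b)) / (\<tau>\<^sup>2 * (a + b) + \<sigma>\<^sup>2)"
      by (rule mult_divide_mult_cancel_left) simp
    finally have e: "(P - R) / (P + R) = (\<tau>\<^sup>2 * (a - b)) / (\<tau>\<^sup>2 * (a + b) + \<sigma>\<^sup>2)" .
    show ?thesis unfolding rho_def Let_def Rj Rb e
      by (simp add: a_def b_def \<alpha>_def \<beta>_def p_def q_def jb_def)
  qed
  have "emeasure ?M {\<omega> \<in> space ?M. hartigan_fixed_point d (datum z \<omega>) C}
      \<le> emeasure ?M {\<omega> \<in> space ?M. F \<omega> \<le> G \<omega>}"
    by (rule emeasure_mono[OF sub Sm])
  also have "\<dots> \<le> ennreal (\<Lambda>/2) * (\<integral>\<^sup>+\<omega>. ennreal (exp (- (s/2) * F \<omega>)) \<partial>?M)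
       + ennreal (1/(2*\<Lambda>)) * (\<integral>\<^sup>+\<omega>. ennreal (exp ((s/2) * G \<omega>)) \<partial>?M)"
    by (rule chernoff2[OF mF mG FA4 FA123(1)])
  also have "\<dots> = ennreal (\<Lambda>/2) * ennreal ((1 / sqrt u) ^ d) + ennreal (1/(2*\<Lambda>)) * ennreal ((1 / sqrt v) ^ d)"
    unfolding I1 I2 ..
  also have "\<dots> = ennreal (\<Lambda>/2 * (1 / sqrt u) ^ d + 1/(2*\<Lambda>) * (1 / sqrt v) ^ d)"
    using FA123(2,3) FA4 by (simp add: ennreal_mult'[symmetric] ennreal_plus[symmetric] del: ennreal_plus)
  also have "\<dots> = ennreal (rho \<tau> \<sigma> C (Rfrac n z C l j) (Rfrac n z C l (other j)) j powr (real d / 4))"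
    unfolding rho_eq FA5 ..
  finally show ?thesis unfolding measure_def by (intro enn2real_leI) simp_all
qed



end
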